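(* Let $\mathcal{A}$ be a $0/1$-arrangement in $\mathbb{Q}^n$ admitting a nice partition $\pi$, and let $H_A,H_B\in\mathcal{A}$ with $A,B$ conflicting. Then $H_A$ and $H_B$ lie in different blocks of $\pi$.
   Context: $H_I=\ker\big(\sum_{i\in I}x_i\big)\subseteq\mathbb{Q}^n$ for $I\subseteq\{1,\dots,n\}$. A $0/1$-arrangement is an arrangement all of whose hyperplanes are of the form $H_I$ for nonempty $I$. For a $0/1$-arrangement $\mathcal{A}$ and $H_A,H_B\in\mathcal{A}$ with $A\neq B$, the sets $A,B$ are conflicting if either (1) $A\cap B\neq\emptyset$, $A\not\subseteq B$ and $B\not\subseteq A$; or (2) $A\cap B=\emptyset$ or $A\subset B$ or $B\subset A$, and $H_{A\triangle B}\notin\mathcal{A}$ ($\triangle$ = symmetric difference). A partition $\pi=(\pi_1,\dots,\pi_s)$ of $\mathcal{A}$ is independent if for every choice $H_i\in\pi_i$ the $s$ defining forms are linearly independent; for $X\in L(\mathcal{A})$ the induced partition $\pi_X$ of $\mathcal{A}_X=\{H\in\mathcal{A}:X\subseteq H\}$ consists of the nonempty sets $\pi_i\cap\mathcal{A}_X$; $\pi$ is nice (a factorization) if it is independent and for every $X\in L(\mathcal{A})\setminus\{V\}$ the induced partition $\pi_X$ has a block which is a singleton. *)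

theory Defs
  imports "HOL-Analysis.Finite_Cartesian_Product"
begin

text \<open>The ambient space V = Q^n is rat^'n, coordinates indexed by the finite type 'n
  (n = CARD('n)). Index sets I are subsets of 'n.\<close>

definition lform :: "'n::finite set \<Rightarrow> rat^'n \<Rightarrow> rat" where
  "lform I x = (\<Sum>i\<in>I. x $ i)"

definition hyp :: "'n::finite set \<Rightarrow> (rat^'n) set" where
  "hyp I = {x. lform I x = 0}"

definition zero_one_arrangement :: "(rat^'n::finite) set set \<Rightarrow> bool" where
  "zero_one_arrangement \<A> \<longleftrightarrow> finite \<A> \<and> (\<forall>H\<in>\<A>. \<exists>I. I \<noteq> {} \<and> H = hyp I)"

definition sym_diff :: "'a set \<Rightarrow> 'a set \<Rightarrow> 'a set" where
  "sym_diff A B = (A - B) \<union> (B - A)"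

definition conflicting :: "(rat^'n::finite) set set \<Rightarrow> 'n set \<Rightarrow> 'n set \<Rightarrow> bool" where
  "conflicting \<A> A B \<longleftrightarrow>
     (A \<inter> B \<noteq> {} \<and> \<not> A \<subseteq> B \<and> \<not> B \<subseteq> A) \<or>
     ((A \<inter> B = {} \<or> A \<subset> B \<or> B \<subset> A) \<and> hyp (sym_diff A B) \<notin> \<A>)"

text \<open>Intersection lattice: intersections of subsets of the arrangement (empty one = V).\<close>
definition intersection_lattice :: "(rat^'n::finite) set set \<Rightarrow> (rat^'n) set set" where
  "intersection_lattice \<A> = {\<Inter>S | S. S \<subseteq> \<A>}"

definition localization :: "(rat^'n::finite) set set \<Rightarrow> (rat^'n) set \<Rightarrow> (rat^'n) set set" where
  "localization \<A> X = {H \<in> \<A>. X \<subseteq> H}"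

definition is_partition :: "'a set set set \<Rightarrow> 'a set set \<Rightarrow> bool" where
  "is_partition P \<A> \<longleftrightarrow> finite P \<and> (\<forall>b\<in>P. b \<noteq> {}) \<and> \<Union>P = \<A> \<and>
     (\<forall>b\<in>P. \<forall>c\<in>P. b \<noteq> c \<longrightarrow> b \<inter> c = {})"

text \<open>Independence: for every choice of one hyperplane per block (with a defining form
  lform I), the chosen defining forms are linearly independent (as functionals on V).\<close>
definition independent_partition :: "(rat^'n::finite) set set set \<Rightarrow> bool" where
  "independent_partition P \<longleftrightarrow>
     (\<forall>f :: (rat^'n) set set \<Rightarrow> 'n set.
        (\<forall>b\<in>P. f b \<noteq> {} \<and> hyp (f b) \<in> b) \<longrightarrow>
        (\<forall>c :: (rat^'n) set set \<Rightarrow> rat.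
           (\<forall>x. (\<Sum>b\<in>P. c b * lform (f b) x) = 0) \<longrightarrow> (\<forall>b\<in>P. c b = 0)))"

definition induced_partition ::
  "(rat^'n::finite) set set set \<Rightarrow> (rat^'n) set set \<Rightarrow> (rat^'n) set \<Rightarrow> (rat^'n) set set set" where
  "induced_partition P \<A> X = {b \<inter> localization \<A> X | b. b \<in> P} - {{}}"

definition nice_partition :: "(rat^'n::finite) set set \<Rightarrow> (rat^'n) set set set \<Rightarrow> bool" where
  "nice_partition \<A> P \<longleftrightarrow> is_partition P \<A> \<and> independent_partition P \<and>
     (\<forall>X\<in>intersection_lattice \<A>. X \<noteq> UNIV \<longrightarrow>
        (\<exists>b\<in>induced_partition P \<A> X. \<exists>H. b = {H}))"

end

theory Submission imports Defs begin

abbreviation ev :: "'n::finite \<Rightarrow> rat^'n" where "ev i \<equiv> axis i 1"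

lemma lform_ev: "lform I (ev i) = (if i \<in> I then 1 else 0)"
  unfolding lform_def axis_def by (simp add: sum.delta')

lemma lform_diff: "lform I (x - y) = lform I x - lform I y"
  unfolding lform_def by (simp add: sum_subtractf)

lemma lform_add: "lform I (x + y) = lform I x + lform I y"
  unfolding lform_def by (simp add: sum.distrib)

lemma key:
  fixes A B I :: "'n::finite set"
  assumes sub: "hyp A \<inter> hyp B \<subseteq> hyp I" and "I \<noteq> {}" "A \<noteq> {}" "B \<noteq> {}" "A \<noteq> B"
  shows "I = A \<or> I = B \<or> (I = sym_diff A B \<and> (A \<inter> B = {} \<or> A \<subset> B \<or> B \<subset> A))"
proof -
  have z: "\<And>x. lform A x = 0 \<Longrightarrow> lform B x = 0 \<Longrightarrow> lform I x = 0"
    using sub by (auto simp: hyp_def)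
  have same: "(i\<in>I) = (j\<in>I)" if "(i\<in>A) = (j\<in>A)" "(i\<in>B) = (j\<in>B)" for i j
  proof -
    have "lform I (ev i - ev j) = 0" using that
      by (intro z) (auto simp: lform_diff lform_ev)
    then show ?thesis by (auto simp: lform_diff lform_ev split: if_splits)
  qed
  have out: "k \<notin> I" if "k \<notin> A" "k \<notin> B" for k
    using z[of "ev k"] that by (auto simp: lform_ev split: if_splits)
  have tri: "(if i\<in>I then 1 else 0) + (if j\<in>I then 1 else 0) = (if k\<in>I then (1::rat) else 0)"
    if "i\<in>A" "i\<notin>B" "j\<notin>A" "j\<in>B" "k\<in>A" "k\<in>B" for i j k
  proof -
    have "lform I (ev i + ev j - ev k) = 0" using that
      by (intro z) (auto simp: lform_diff lform_add lform_ev)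
    then show ?thesis by (simp add: lform_diff lform_add lform_ev)
  qed
  define p where "p = (\<exists>k\<in>A\<inter>B. k\<in>I)"
  define q where "q = (\<exists>k\<in>A-B. k\<in>I)"
  define r where "r = (\<exists>k\<in>B-A. k\<in>I)"
  have Ieq: "I = {x. (x\<in>A \<and> x\<in>B \<and> p) \<or> (x\<in>A \<and> x\<notin>B \<and> q) \<or> (x\<notin>A \<and> x\<in>B \<and> r)}"
  proof (intro set_eqI iffI)
    fix x assume "x \<in> I" then show "x \<in> {x. (x\<in>A \<and> x\<in>B \<and> p) \<or> (x\<in>A \<and> x\<notin>B \<and> q) \<or> (x\<notin>A \<and> x\<in>B \<and> r)}"
      using out[of x] unfolding p_def q_def r_def by blast
  next
    fix x assume "x \<in> {x. (x\<in>A \<and> x\<in>B \<and> p) \<or> (x\<in>A \<and> x\<notin>B \<and> q) \<or> (x\<notin>A \<and> x\<in>B \<and> r)}"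
    then show "x \<in> I" unfolding p_def q_def r_def using same by blast
  qed
  have pqr: "p \<or> q \<or> r" using \<open>I \<noteq> {}\<close> Ieq by auto
  show ?thesis
  proof (cases "A \<inter> B = {}")
    case True
    then have np: "\<not> p" unfolding p_def by auto
    have "A - B \<noteq> {}" "B - A \<noteq> {}" using True assms(3,4) by auto
    then show ?thesis using np pqr True by (subst (1 2 3) Ieq; auto simp: sym_diff_def q_def r_def)
  next
    case F: False
    show ?thesis
    proof (cases "A \<subseteq> B")
      case True
      then have nq: "\<not> q" unfolding q_def by auto
      have "B - A \<noteq> {}" using True assms(5) by auto
      then show ?thesis using nq pqr True F by (subst (1 2 3) Ieq; auto simp: sym_diff_def p_def r_def)
    next
      case nAB: False
      show ?thesis
      proof (cases "B \<subseteq> A")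
        case True
        then have nr: "\<not> r" unfolding r_def by auto
        have "A - B \<noteq> {}" using True assms(5) by auto
        then show ?thesis using nr pqr True F nAB by (subst (1 2 3) Ieq; auto simp: sym_diff_def p_def q_def)
      next
        case nBA: False
        obtain i where i: "i\<in>A" "i\<notin>B" using nAB by auto
        obtain j where j: "j\<notin>A" "j\<in>B" using nBA by auto
        obtain k where k: "k\<in>A" "k\<in>B" using F by auto
        have pi: "p = (k \<in> I)" "q = (i\<in>I)" "r = (j\<in>I)"
          unfolding p_def q_def r_def using same i j k by blast+
        have "(q \<and> p \<and> \<not> r) \<or> (r \<and> p \<and> \<not> q)"
          using tri[OF i j k] pqr pi by (auto split: if_splits)
        then show ?thesis by (subst (1 2) Ieq; auto)
      qed
    qed
  qed
qed

lemma hyp_sub: "hyp A \<subseteq> hyp B \<Longrightarrow> B \<subseteq> A"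
proof
  fix j assume s: "hyp A \<subseteq> hyp B" and j: "j \<in> B"
  show "j \<in> A"
  proof (rule ccontr)
    assume "j \<notin> A"
    then have "ev j \<in> hyp A" by (simp add: hyp_def lform_ev)
    with s have "ev j \<in> hyp B" by blast
    with j show False by (simp add: hyp_def lform_ev)
  qed
qed

lemma hyp_inj: "hyp A = hyp B \<Longrightarrow> A = B"
  using hyp_sub[of A B] hyp_sub[of B A] by auto

theorem lemma8p7:
  fixes \<A> :: "(rat^'n::finite) set set" and P :: "(rat^'n) set set set" and A B :: "'n set"
  assumes "zero_one_arrangement \<A>"
    and "nice_partition \<A> P"
    and "hyp A \<in> \<A>" and "hyp B \<in> \<A>" and "A \<noteq> B"
    and "conflicting \<A> A B"
  shows "\<not> (\<exists>b\<in>P. hyp A \<in> b \<and> hyp B \<in> b)"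
proof
  assume "\<exists>b\<in>P. hyp A \<in> b \<and> hyp B \<in> b"
  then obtain b where b: "b \<in> P" "hyp A \<in> b" "hyp B \<in> b" by blast
  have all: "\<forall>H\<in>\<A>. \<exists>I. I \<noteq> {} \<and> H = hyp I" using assms(1) unfolding zero_one_arrangement_def by simp
  have ne: "C \<noteq> {}" if hC: "hyp C \<in> \<A>" for C
  proof -
    obtain I where "I \<noteq> {}" "hyp C = hyp I" using all[rule_format, OF hC] by (elim exE conjE)
    then show ?thesis using hyp_inj[of C I] by simp
  qed
  have Ane: "A \<noteq> {}" and Bne: "B \<noteq> {}" using ne[OF assms(3)] ne[OF assms(4)] by simp_all
  define X where "X = hyp A \<inter> hyp B"
  have XL: "X \<in> intersection_lattice \<A>" unfolding intersection_lattice_def X_def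
    using assms(3,4) by (intro CollectI exI[of _ "{hyp A, hyp B}"]) auto
  obtain a where a: "a \<in> A" using Ane by auto
  have "ev a \<notin> X" using a by (simp add: X_def hyp_def lform_ev)
  then have XU: "X \<noteq> UNIV" by auto
  have loc: "localization \<A> X = {hyp A, hyp B}"
  proof (intro equalityI subsetI)
    fix H assume "H \<in> localization \<A> X"
    then have H: "H \<in> \<A>" "X \<subseteq> H" unfolding localization_def by auto
    obtain I where I: "I \<noteq> {}" "H = hyp I" using all[rule_format, OF H(1)] by (elim exE conjE)
    have "I = A \<or> I = B \<or> (I = sym_diff A B \<and> (A \<inter> B = {} \<or> A \<subset> B \<or> B \<subset> A))"
      using key[of A B I] H(2) I(1) Ane Bne assms(5) unfolding X_def I(2) by blast
    moreover have "\<not> (I = sym_diff A B \<and> (A \<inter> B = {} \<or> A \<subset> B \<or> B \<subset> A))"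
    proof
      assume "I = sym_diff A B \<and> (A \<inter> B = {} \<or> A \<subset> B \<or> B \<subset> A)"
      then have "hyp (sym_diff A B) \<in> \<A>" "A \<inter> B = {} \<or> A \<subset> B \<or> B \<subset> A" using H(1) I by auto
      with assms(6) show False unfolding conflicting_def by blast
    qed
    ultimately show "H \<in> {hyp A, hyp B}" using I by blast
  next
    fix H assume "H \<in> {hyp A, hyp B}"
    then show "H \<in> localization \<A> X" using assms(3,4) unfolding localization_def X_def by auto
  qed
  have dis: "hyp A \<noteq> hyp B" using hyp_inj[of A B] assms(5) by auto
  obtain c H where c: "c \<in> induced_partition P \<A> X" "c = {H}"
    using assms(2) XL XU unfolding nice_partition_def by blast
  have cc: "c \<in> {b \<inter> localization \<A> X | b. b \<in> P}" "c \<noteq> {}"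
    using c(1) unfolding induced_partition_def by auto
  then obtain b' where b'0: "b' \<in> P" "c = b' \<inter> localization \<A> X" by blast
  have b': "b' \<in> P" "c = b' \<inter> {hyp A, hyp B}" "c \<noteq> {}" using b'0 cc(2) loc by auto
  have part: "\<forall>b\<in>P. \<forall>c\<in>P. b \<noteq> c \<longrightarrow> b \<inter> c = {}"
    using assms(2) unfolding nice_partition_def is_partition_def by blast
  show False
  proof (cases "b' = b")
    case True
    then have "c = {hyp A, hyp B}" using b b' by auto
    then show False using c(2) dis by auto
  next
    case False
    then have "b' \<inter> b = {}" using part b(1) b'(1) by blast
    then show False using b b' by auto
  qed
qed

end
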